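(* $Spec_B(A)$ is a topological space whose closed subsets are the sets $\mathcal{V}(b)=\{p\in Spec_B(A)\mid b\leq p\}$ with $b\in B$. Dually, its open subsets are the sets $\mathcal{U}(b)=\{p\in Spec_B(A)\mid b\nleq p\}$ with $b\in B$.
   Context: Let $A$ be a quasi-quantale, i.e. a complete $\bigvee$-semilattice (with bottom $0$ and top $1$) equipped with an associative product $A\times A\to A$ such that $(\bigvee X)a=\bigvee\{xa\mid x\in X\}$ and $a(\bigvee Y)=\bigvee\{ay\mid y\in Y\}$ for all directed subsets $X,Y\subseteq A$ and all $a\in A$. Let $B$ be a subquasi-quantale of $A$, i.e. a sub-$\bigvee$-semilattice of $A$ closed under the product on which these two directed distributive laws hold for all directed $X,Y\subseteq B$ and $a\in B$. Assume moreover that $0,1\in B$ and that $1b\leq b$ and $b1\leq b$ for all $b\in B$. An element $1\neq p\in A$ is prime relative to $B$ if whenever $ab\leq p$ with $a,b\in B$ then $a\leq p$ or $b\leq p$; $Spec_B(A)$ denotes the set of all elements of $A$ that are prime relative to $B$. *)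

theory Defs
  imports "HOL-Analysis.Abstract_Topology"
begin

definition directed_set :: "'a::order set \<Rightarrow> bool" where
  "directed_set X \<longleftrightarrow> X \<noteq> {} \<and> (\<forall>x\<in>X. \<forall>y\<in>X. \<exists>z\<in>X. x \<le> z \<and> y \<le> z)"

definition quasi_quantale :: "'a::{complete_lattice,semigroup_mult} itself \<Rightarrow> bool" where
  "quasi_quantale _ \<longleftrightarrow>
     (\<forall>X::'a set. \<forall>a. directed_set X \<longrightarrow> Sup X * a = Sup {x * a | x. x \<in> X}) \<and>
     (\<forall>Y::'a set. \<forall>a. directed_set Y \<longrightarrow> a * Sup Y = Sup {a * y | y. y \<in> Y})"

definition subquasi_quantale :: "'a::{complete_lattice,semigroup_mult} set \<Rightarrow> bool" where
  "subquasi_quantale B \<longleftrightarrow>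
     (\<forall>S\<subseteq>B. Sup S \<in> B) \<and> (\<forall>a\<in>B. \<forall>b\<in>B. a * b \<in> B) \<and>
     (\<forall>X\<subseteq>B. \<forall>a\<in>B. directed_set X \<longrightarrow> Sup X * a = Sup {x * a | x. x \<in> X}) \<and>
     (\<forall>Y\<subseteq>B. \<forall>a\<in>B. directed_set Y \<longrightarrow> a * Sup Y = Sup {a * y | y. y \<in> Y})"

definition prime_rel :: "'a::{complete_lattice,semigroup_mult} set \<Rightarrow> 'a \<Rightarrow> bool" where
  "prime_rel B p \<longleftrightarrow> p \<noteq> top \<and>
     (\<forall>a\<in>B. \<forall>b\<in>B. a * b \<le> p \<longrightarrow> a \<le> p \<or> b \<le> p)"

definition Spec :: "'a::{complete_lattice,semigroup_mult} set \<Rightarrow> 'a set" where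
  "Spec B = {p. prime_rel B p}"

definition V_set :: "'a::{complete_lattice,semigroup_mult} set \<Rightarrow> 'a \<Rightarrow> 'a set" where
  "V_set B b = {p \<in> Spec B. b \<le> p}"

definition U_set :: "'a::{complete_lattice,semigroup_mult} set \<Rightarrow> 'a \<Rightarrow> 'a set" where
  "U_set B b = {p \<in> Spec B. \<not> b \<le> p}"

end

theory Submission
  imports Defs
begin

lemma qq_mono:
  fixes x y a :: "'a::{complete_lattice,semigroup_mult}"
  assumes q: "quasi_quantale TYPE('a)" and xy: "x \<le> y"
  shows "x * a \<le> y * a" "a * x \<le> a * y"
proof -
  have d: "directed_set {x, y}" using xy unfolding directed_set_def by auto
  have s: "Sup {x, y} = y" using xy by (simp add: sup_absorb2)
  have L: "\<forall>X::'a set. \<forall>a. directed_set X \<longrightarrow> Sup X * a = Sup {x * a | x. x \<in> X}"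
    and R: "\<forall>Y::'a set. \<forall>a. directed_set Y \<longrightarrow> a * Sup Y = Sup {a * y | y. y \<in> Y}"
    using q unfolding quasi_quantale_def by blast+
  have e1: "{z * a |z. z \<in> {x,y}} = {x*a, y*a}" by auto
  have e2: "{a * z |z. z \<in> {x,y}} = {a*x, a*y}" by auto
  have "y * a = Sup {z * a | z. z \<in> {x,y}}" using L[rule_format, OF d] s by simp
  then have "y * a = sup (x*a) (y*a)" unfolding e1 by simp
  then show "x * a \<le> y * a" by (metis sup.cobounded1)
  have "a * y = Sup {a * z | z. z \<in> {x,y}}" using R[rule_format, OF d] s by simp
  then have "a * y = sup (a*x) (a*y)" unfolding e2 by simp
  then show "a * x \<le> a * y" by (metis sup.cobounded1)
qed

theorem proposition3p18:
  fixes B :: "'a::{complete_lattice,semigroup_mult} set"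
  assumes "quasi_quantale TYPE('a)"
    and "subquasi_quantale B"
    and "bot \<in> B" and "top \<in> B"
    and "\<And>b. b \<in> B \<Longrightarrow> top * b \<le> b"
    and "\<And>b. b \<in> B \<Longrightarrow> b * top \<le> b"
  shows "\<exists>T::'a topology. topspace T = Spec B \<and>
           (\<forall>S. closedin T S \<longleftrightarrow> (\<exists>b\<in>B. S = V_set B b)) \<and>
           (\<forall>S. openin T S \<longleftrightarrow> (\<exists>b\<in>B. S = U_set B b))"
proof -
  define P where "P = Spec B"
  define Op where "Op = (\<lambda>S. S \<subseteq> P \<and> (\<exists>b\<in>B. P - S = V_set B b))"
  have VP: "V_set B b \<subseteq> P" for b unfolding V_set_def P_def by auto
  have Vbot: "V_set B bot = P" unfolding V_set_def P_def by auto
  have Vtop: "V_set B top = {}" unfolding V_set_def Spec_def prime_rel_def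
    by (simp add: top_unique)
  have Vmul: "V_set B (a*b) = V_set B a \<union> V_set B b" if "a \<in> B" "b \<in> B" for a b
  proof -
    have "a * b \<le> a" by (rule order_trans[OF qq_mono(2)[OF assms(1) top_greatest] assms(6)[OF that(1)]])
    have "a * b \<le> b" by (rule order_trans[OF qq_mono(1)[OF assms(1) top_greatest] assms(5)[OF that(2)]])
    have "a * b \<le> p \<longleftrightarrow> a \<le> p \<or> b \<le> p" if "p \<in> Spec B" for p
    proof
      assume "a * b \<le> p" then show "a \<le> p \<or> b \<le> p"
        using that \<open>a \<in> B\<close> \<open>b \<in> B\<close> unfolding Spec_def prime_rel_def by blast
    next
      assume "a \<le> p \<or> b \<le> p" then show "a * b \<le> p"
        using \<open>a * b \<le> a\<close> \<open>a * b \<le> b\<close> by (meson order_trans)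
    qed
    then show ?thesis unfolding V_set_def by blast
  qed
  have sq1: "\<forall>S\<subseteq>B. Sup S \<in> B" and sq2: "\<forall>a\<in>B. \<forall>b\<in>B. a * b \<in> B"
  proof -
    note h = assms(2)[unfolded subquasi_quantale_def]
    show "\<forall>S\<subseteq>B. Sup S \<in> B" using conjunct1[OF h] .
    show "\<forall>a\<in>B. \<forall>b\<in>B. a * b \<in> B" using conjunct1[OF conjunct2[OF h]] .
  qed
  have mulB: "a * b \<in> B" if "a \<in> B" "b \<in> B" for a b
    using sq2 that by blast
  have supB: "Sup X \<in> B" if "X \<subseteq> B" for X
    using sq1 that by blast
  have top: "istopology Op"
    unfolding istopology_def
  proof (intro conjI allI impI ballI)
    fix S T assume "Op S" "Op T"
    then obtain a b where ab: "a \<in> B" "b \<in> B" "P - S = V_set B a" "P - T = V_set B b"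
      "S \<subseteq> P" "T \<subseteq> P" unfolding Op_def by blast
    have "P - (S \<inter> T) = (P - S) \<union> (P - T)" by blast
    also have "\<dots> = V_set B (a*b)" using ab(3,4) Vmul[OF ab(1,2)] by simp
    finally have "P - (S \<inter> T) = V_set B (a*b)" .
    then show "Op (S \<inter> T)" unfolding Op_def using ab mulB by blast
  next
    fix K assume K: "\<forall>S\<in>K. Op S"
    define X where "X = {b\<in>B. \<exists>S\<in>K. P - S = V_set B b}"
    have "P - \<Union>K = V_set B (Sup X)"
    proof (rule set_eqI, rule iffI)
      fix p assume p: "p \<in> P - \<Union>K"
      have "x \<le> p" if xX: "x \<in> X" for x
      proof -
        obtain S where "S \<in> K" "P - S = V_set B x" using xX unfolding X_def by blast
        then have "p \<in> V_set B x" using p by blast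
        then show ?thesis unfolding V_set_def by simp
      qed
      then show "p \<in> V_set B (Sup X)" using p unfolding V_set_def P_def
        by (simp add: Sup_least)
    next
      fix p assume p: "p \<in> V_set B (Sup X)"
      have pP: "p \<in> P" by (rule subsetD[OF VP p])
      have "p \<notin> S" if SK: "S \<in> K" for S
      proof -
        obtain b where b: "b \<in> B" "P - S = V_set B b" using K SK unfolding Op_def by blast
        then have "b \<in> X" using SK unfolding X_def by blast
        then have "b \<le> Sup X" by (rule Sup_upper)
        moreover have "Sup X \<le> p" using p unfolding V_set_def by simp
        ultimately have "b \<le> p" by (rule order_trans)
        then have "p \<in> V_set B b" using pP unfolding V_set_def P_def by auto
        then show ?thesis using b(2) by blast
      qed
      then show "p \<in> P - \<Union>K" using pP by auto
    qed
    moreover have "\<Union>K \<subseteq> P" using K unfolding Op_def by auto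
    moreover have "Sup X \<in> B" using supB unfolding X_def by auto
    ultimately show "Op (\<Union>K)" unfolding Op_def by blast
  qed
  define T where "T = topology Op"
  have oT: "openin T S \<longleftrightarrow> Op S" for S unfolding T_def using top by simp
  have "Op P" unfolding Op_def using Vtop assms(4) by auto
  then have tsp: "topspace T = P" unfolding topspace_def oT Op_def by auto
  have cl: "closedin T S \<longleftrightarrow> (\<exists>b\<in>B. S = V_set B b)" for S
  proof
    assume "closedin T S"
    then have SP: "S \<subseteq> P" and "Op (P - S)" unfolding closedin_def tsp oT by auto
    then obtain b where "b \<in> B" "P - (P - S) = V_set B b" unfolding Op_def by blast
    moreover have "P - (P - S) = S" using SP by blast
    ultimately show "\<exists>b\<in>B. S = V_set B b" by metis
  next
    assume "\<exists>b\<in>B. S = V_set B b"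
    then obtain b where "b \<in> B" "S = V_set B b" by blast
    moreover have "P - (P - V_set B b) = V_set B b" using VP[of b] by blast
    ultimately show "closedin T S" unfolding closedin_def tsp oT Op_def using VP[of b] by blast
  qed
  have UV: "U_set B b = P - V_set B b" for b unfolding U_set_def V_set_def P_def by auto
  have op: "openin T S \<longleftrightarrow> (\<exists>b\<in>B. S = U_set B b)" for S
  proof
    assume "openin T S"
    then obtain b where "b\<in>B" "S \<subseteq> P" "P - S = V_set B b" unfolding oT Op_def by blast
    moreover have "P - (P - S) = S" using \<open>S \<subseteq> P\<close> by blast
    ultimately show "\<exists>b\<in>B. S = U_set B b" unfolding UV by metis
  next
    assume "\<exists>b\<in>B. S = U_set B b"
    then obtain b where "b \<in> B" "S = P - V_set B b" unfolding UV by blast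
    moreover have "P - (P - V_set B b) = V_set B b" using VP[of b] by blast
    ultimately show "openin T S" unfolding oT Op_def by auto
  qed
  show ?thesis
    apply (rule exI[of _ T])
    using tsp cl op unfolding P_def by simp
qed

end
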